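(* Let $m\equiv 0\pmod 3$ be a positive integer and let $\mathcal Z$ be a three-class symmetric association scheme of order $3m^2$ with adjacency matrices $A_0=I,A_1,A_2,A_3$. Then the following are equivalent: (1) the character table (first eigenmatrix) of $\mathcal Z$ is $$P=\begin{bmatrix}1&m(m-1)&m(m+1)&(m-1)(m+1)\\1&m&0&-m-1\\1&0&-m&m-1\\1&-m&m&-1\end{bmatrix};$$ (2) $\mathcal Z$ is self-dual and $$A_1^3=m^2A_1+\tfrac13m^2(m-1)(m-2)J,\quad A_2^3=m^2A_2+\tfrac13m^2(m+1)(m+2)J,\quad (A_3+I)^3=m^2(A_3+I)+\tfrac13m^2(m-1)(m+1)J.$$
   Context: A three-class symmetric association scheme is a partition of $X\times X$ into relations $R_0=\{(x,x)\},R_1,R_2,R_3$ whose symmetric $0/1$ adjacency matrices satisfy $A_0=I$, $\sum A_i=J$ (all-ones matrix) and $A_iA_j=\sum_h p_{ij}^hA_h$ for constants $p_{ij}^h$. Its Bose–Mesner algebra (span of the $A_i$) has primitive idempotents $E_0=\frac1{|X|}J,E_1,E_2,E_3$; writing $A_j=\sum_i p_j(i)E_i$ and $E_i=\frac1{|X|}\sum_j q_i(j)A_j$, the first eigenmatrix (character table) is $P$ with $P_{ij}=p_j(i)$ and the second eigenmatrix is $Q$ with $Q_{ij}=q_j(i)$ (for a suitable ordering of the idempotents). The scheme is (formally) self-dual if $P=Q$. *)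

theory Defs
  imports "HOL-Analysis.Analysis"
begin

text \<open>Square real matrices indexed by the finite point set 'a (the type).
  A three-class scheme is given by its four adjacency matrices A 0, ..., A 3.\<close>

definition allones :: "real^'a::finite^'a" where
  "allones = (\<chi> i j. 1)"

definition sym_assoc_scheme3 :: "(nat \<Rightarrow> real^'a::finite^'a) \<Rightarrow> bool" where
  "sym_assoc_scheme3 A \<longleftrightarrow>
     A 0 = mat 1 \<and>
     (\<forall>i<4. \<forall>x y. A i $ x $ y = 0 \<or> A i $ x $ y = 1) \<and>
     (\<forall>i<4. transpose (A i) = A i) \<and>
     (\<forall>i<4. A i \<noteq> 0) \<and>
     (\<Sum>i<4. A i) = allones \<and>
     (\<forall>i<4. \<forall>j<4. \<exists>p::nat \<Rightarrow> real. A i ** A j = (\<Sum>h<4. p h *\<^sub>R A h))"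

definition bm_prim_idempotents ::
  "(nat \<Rightarrow> real^'a::finite^'a) \<Rightarrow> (nat \<Rightarrow> real^'a^'a) \<Rightarrow> bool" where
  "bm_prim_idempotents A E \<longleftrightarrow>
     (\<forall>i<4. E i \<in> span (A ` {..<4})) \<and>
     E 0 = (1 / real CARD('a)) *\<^sub>R allones \<and>
     (\<forall>i<4. \<forall>j<4. E i ** E j = (if i = j then E i else 0)) \<and>
     (\<forall>i<4. E i \<noteq> 0) \<and>
     (\<Sum>i<4. E i) = mat 1"

text \<open>P i j = p_j(i): A_j = sum_i p_j(i) E_i.\<close>
definition first_eigenmatrix ::
  "(nat \<Rightarrow> real^'a::finite^'a) \<Rightarrow> (nat \<Rightarrow> real^'a^'a) \<Rightarrow> (nat \<Rightarrow> nat \<Rightarrow> real) \<Rightarrow> bool" where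
  "first_eigenmatrix A E P \<longleftrightarrow> (\<forall>j<4. A j = (\<Sum>i<4. P i j *\<^sub>R E i))"

text \<open>Q i j = q_j(i): E_i = (1/|X|) sum_j q_i(j) A_j.\<close>
definition second_eigenmatrix ::
  "(nat \<Rightarrow> real^'a::finite^'a) \<Rightarrow> (nat \<Rightarrow> real^'a^'a) \<Rightarrow> (nat \<Rightarrow> nat \<Rightarrow> real) \<Rightarrow> bool" where
  "second_eigenmatrix A E Q \<longleftrightarrow>
     (\<forall>i<4. E i = (1 / real CARD('a)) *\<^sub>R (\<Sum>j<4. Q j i *\<^sub>R A j))"

definition char_table_m :: "real \<Rightarrow> nat \<Rightarrow> nat \<Rightarrow> real" where
  "char_table_m m i j =
     [[1, m*(m-1), m*(m+1), (m-1)*(m+1)],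
      [1, m, 0, -m-1],
      [1, 0, -m, m-1],
      [1, -m, m, -1]] ! i ! j"

definition self_dual :: "(nat \<Rightarrow> real^'a::finite^'a) \<Rightarrow> bool" where
  "self_dual A \<longleftrightarrow> (\<exists>E P Q. bm_prim_idempotents A E \<and> first_eigenmatrix A E P \<and>
       second_eigenmatrix A E Q \<and> (\<forall>i<4. \<forall>j<4. P i j = Q i j))"

end

theory Submission
  imports Defs
begin

lemma four: "{..<4::nat} = {0,1,2,3}" by auto
lemma lt4: "(i::nat) < 4 \<Longrightarrow> i = 0 \<or> i = 1 \<or> i = 2 \<or> i = 3" by auto

lemma mm_add_r: "((A::real^'n^'m) + B) ** C = A ** C + B ** C"
  by (vector matrix_matrix_mult_def sum.distrib[symmetric] field_simps)
lemma mm_scale_l: "((k::real) *\<^sub>R (A::real^'n^'m)) ** B = k *\<^sub>R (A ** B)"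
  by (simp add: scalar_matrix_assoc)
lemma mm_scale_r: "(A::real^'n^'m) ** ((k::real) *\<^sub>R B) = k *\<^sub>R (A ** B)"
  by (simp add: matrix_scalar_ac scalar_matrix_assoc)
lemma mm_sum_l: "(sum (f :: 'i \<Rightarrow> real^'n^'m) S) ** (C::real^'p^'n) = sum (\<lambda>i. f i ** C) S"
  by (induction S rule: infinite_finite_induct) (simp_all add: mm_add_r)
lemma mm_sum_r: "(C::real^'n^'m) ** sum (f :: 'i \<Rightarrow> real^'p^'n) S = sum (\<lambda>i. C ** f i) S"
  by (induction S rule: infinite_finite_induct) (simp_all add: matrix_add_ldistrib)

lemma scl: "(a::real) *\<^sub>R (X::'v::real_vector) = b *\<^sub>R X \<Longrightarrow> X \<noteq> 0 \<Longrightarrow> a = b" by simp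

lemma E_orth: "bm_prim_idempotents A E \<Longrightarrow> i < 4 \<Longrightarrow> j < 4 \<Longrightarrow>
   E i ** E j = (if i = j then E i else 0)"
  unfolding bm_prim_idempotents_def by blast

lemma E_nz: "bm_prim_idempotents A E \<Longrightarrow> i < 4 \<Longrightarrow> E i \<noteq> 0"
  unfolding bm_prim_idempotents_def by blast

lemma J_E:
  fixes A :: "nat \<Rightarrow> real^'a::finite^'a"
  assumes "bm_prim_idempotents A E"
  shows "allones = real CARD('a) *\<^sub>R E 0"
proof -
  have "E 0 = (1 / real CARD('a)) *\<^sub>R allones" using assms unfolding bm_prim_idempotents_def by blast
  then have "real CARD('a) *\<^sub>R E 0 = (real CARD('a) * (1 / real CARD('a))) *\<^sub>R allones" by simp
  also have "\<dots> = allones" by simp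
  finally show ?thesis by simp
qed

lemma allones_E:
  fixes A :: "nat \<Rightarrow> real^'a::finite^'a"
  assumes "bm_prim_idempotents A E" "l < 4"
  shows "allones ** E l = (if l = 0 then real CARD('a) else 0) *\<^sub>R E l"
  using assms by (simp add: J_E[OF assms(1)] mm_scale_l E_orth)

lemma ext_E:
  fixes A :: "nat \<Rightarrow> real^'a::finite^'a"
  assumes "bm_prim_idempotents A E" "\<And>l. l < 4 \<Longrightarrow> X ** E l = Y ** E l"
  shows "X = Y"
proof -
  have s: "(\<Sum>i<4. E i) = mat 1" using assms(1) unfolding bm_prim_idempotents_def by blast
  have "X = X ** (\<Sum>i<4. E i)" by (simp add: s)
  also have "\<dots> = (\<Sum>i<4. X ** E i)" by (simp add: mm_sum_r)
  also have "\<dots> = (\<Sum>i<4. Y ** E i)" using assms(2) by simp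
  also have "\<dots> = Y ** (\<Sum>i<4. E i)" by (simp add: mm_sum_r)
  also have "\<dots> = Y" by (simp add: s)
  finally show ?thesis .
qed

definition eig :: "real^'a::finite^'a \<Rightarrow> (nat \<Rightarrow> real^'a^'a) \<Rightarrow> (nat \<Rightarrow> real) \<Rightarrow> bool" where
  "eig B E b \<longleftrightarrow> (\<forall>l<4. B ** E l = b l *\<^sub>R E l)"

lemma eig_A:
  fixes A :: "nat \<Rightarrow> real^'a::finite^'a"
  assumes bm: "bm_prim_idempotents A E" and fe: "first_eigenmatrix A E P" and j: "j < 4"
  shows "eig (A j) E (\<lambda>l. P l j)"
  unfolding eig_def
proof (intro allI impI)
  fix l :: nat assume l: "l < 4"
  have "A j = (\<Sum>i<4. P i j *\<^sub>R E i)" using fe j unfolding first_eigenmatrix_def by blast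
  then have "A j ** E l = (\<Sum>i<4. P i j *\<^sub>R (E i ** E l))" by (simp add: mm_sum_l mm_scale_l)
  also have "\<dots> = P l j *\<^sub>R E l"
    using lt4[OF l] by (auto simp: four E_orth[OF bm])
  finally show "A j ** E l = P l j *\<^sub>R E l" .
qed

lemma eig_mul:
  assumes "eig B E b" "l < 4"
  shows "(X ** B) ** E l = b l *\<^sub>R (X ** E l)"
  using assms by (simp add: eig_def matrix_mul_assoc[symmetric] mm_scale_r)

lemma eig_cube:
  fixes A :: "nat \<Rightarrow> real^'a::finite^'a"
  assumes bm: "bm_prim_idempotents A E" and e: "eig B E b"
  shows "(B ** B ** B = \<mu> *\<^sub>R B + c *\<^sub>R allones) \<longleftrightarrow>
     (\<forall>l<4. b l ^ 3 = \<mu> * b l + (if l = 0 then c * real CARD('a) else 0))"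
proof -
  have L: "(B ** B ** B) ** E l = (b l ^ 3) *\<^sub>R E l" if "l < 4" for l
  proof -
    have "(B ** B ** B) ** E l = b l *\<^sub>R ((B ** B) ** E l)" using eig_mul[OF e that] .
    also have "\<dots> = b l *\<^sub>R (b l *\<^sub>R (B ** E l))" using eig_mul[OF e that, of B] by simp
    also have "\<dots> = (b l ^ 3) *\<^sub>R E l" using e that by (simp add: eig_def power3_eq_cube)
    finally show ?thesis .
  qed
  have R: "(\<mu> *\<^sub>R B + c *\<^sub>R allones) ** E l
      = (\<mu> * b l + (if l = 0 then c * real CARD('a) else 0)) *\<^sub>R E l" if "l < 4" for l
    using e that allones_E[OF bm that] by (simp add: mm_add_r mm_scale_l eig_def scaleR_add_left)
  show ?thesis
  proof
    assume h: "B ** B ** B = \<mu> *\<^sub>R B + c *\<^sub>R allones"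
    show "\<forall>l<4. b l ^ 3 = \<mu> * b l + (if l = 0 then c * real CARD('a) else 0)"
    proof (intro allI impI)
      fix l :: nat assume l: "l < 4"
      have "(b l ^ 3) *\<^sub>R E l = (\<mu> * b l + (if l = 0 then c * real CARD('a) else 0)) *\<^sub>R E l"
      proof -
        have "(b l ^ 3) *\<^sub>R E l = (B ** B ** B) ** E l" by (rule L[OF l, symmetric])
        also have "\<dots> = (\<mu> *\<^sub>R B + c *\<^sub>R allones) ** E l" by (simp only: h)
        also have "\<dots> = (\<mu> * b l + (if l = 0 then c * real CARD('a) else 0)) *\<^sub>R E l" by (rule R[OF l])
        finally show ?thesis .
      qed
      then show "b l ^ 3 = \<mu> * b l + (if l = 0 then c * real CARD('a) else 0)"
        by (rule scl) (rule E_nz[OF bm l])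
    qed
  next
    assume h: "\<forall>l<4. b l ^ 3 = \<mu> * b l + (if l = 0 then c * real CARD('a) else 0)"
    show "B ** B ** B = \<mu> *\<^sub>R B + c *\<^sub>R allones"
      by (rule ext_E[OF bm]) (simp add: L R h)
  qed
qed

lemma eig_A3:
  fixes A :: "nat \<Rightarrow> real^'a::finite^'a"
  assumes bm: "bm_prim_idempotents A E" and fe: "first_eigenmatrix A E P"
  shows "eig (A 3 + mat 1) E (\<lambda>l. P l 3 + 1)"
  using eig_A[OF bm fe, of 3] by (simp add: eig_def mm_add_r scaleR_add_left)

lemma col1:
  fixes m s1 s2 s3 :: real
  assumes "m = 3 \<or> m \<ge> 6" "s1 \<in> {-1,0,1}" "s2 \<in> {-1,0,1}" "s3 \<in> {-1,0,1}"
  and "(m - 1) + (m*m-m)* s1 + (m*m+m)* s2 + (m*m-1)* s3 = 0"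
  shows "(s1 = 1 \<and> s2 = 0 \<and> s3 = -1) \<or> (m = 3 \<and> s1 = -1 \<and> s2 = 1 \<and> s3 = -1)"
  using assms(1)
proof
  assume "m = 3" then show ?thesis using assms(2-5) by (elim insertE emptyE) simp_all
next
  assume m6: "m \<ge> 6"
  have M: "m*m \<ge> 6*m" using m6 by (simp add: mult_right_mono)
  from assms(2,3,4) show ?thesis
    apply (elim insertE emptyE)
    using assms(5) M m6 by (simp_all add: algebra_simps, linarith?)
qed
lemma col2:
  fixes m s1 s2 s3 :: real
  assumes "m = 3 \<or> m \<ge> 6" "s1 \<in> {-1,0,1}" "s2 \<in> {-1,0,1}" "s3 \<in> {-1,0,1}"
  and "(m + 1) + (m*m-m)* s1 + (m*m+m)* s2 + (m*m-1)* s3 = 0"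
  shows "(s1 = 0 \<and> s2 = -1 \<and> s3 = 1)"
  using assms(1)
proof
  assume "m = 3" then show ?thesis using assms(2-5) by (elim insertE emptyE) simp_all
next
  assume m6: "m \<ge> 6"
  have M: "m*m \<ge> 6*m" using m6 by (simp add: mult_right_mono)
  from assms(2,3,4) show ?thesis
    apply (elim insertE emptyE)
    using assms(5) M m6 by (simp_all add: algebra_simps, linarith?)
qed
lemma col3:
  fixes m s1 s2 s3 :: real
  assumes "m = 3 \<or> m \<ge> 6" "s1 \<in> {-1,0,1}" "s2 \<in> {-1,0,1}" "s3 \<in> {-1,0,1}"
  and "(m*m-m)* s1 + (m*m+m)* s2 + (m*m-1)* s3 = 2*m"
  shows "(s1 = -1 \<and> s2 = 1 \<and> s3 = 0) \<or> (m = 3 \<and> s1 = 1 \<and> s2 = 0 \<and> s3 = 0)"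
  using assms(1)
proof
  assume "m = 3" then show ?thesis using assms(2-5) by (elim insertE emptyE) simp_all
next
  assume m6: "m \<ge> 6"
  have M: "m*m \<ge> 6*m" using m6 by (simp add: mult_right_mono)
  from assms(2,3,4) show ?thesis
    apply (elim insertE emptyE)
    using assms(5) M m6 by (simp_all add: algebra_simps, linarith?)
qed
lemma comb:
  fixes m s1 s2 s3 t1 t2 t3 u1 u2 u3 :: real
  assumes m: "m = 3 \<or> m \<ge> 6"
   and s: "s1 \<in> {-1,0,1}" "s2 \<in> {-1,0,1}" "s3 \<in> {-1,0,1}"
   and t: "t1 \<in> {-1,0,1}" "t2 \<in> {-1,0,1}" "t3 \<in> {-1,0,1}"
   and u: "u1 \<in> {-1,0,1}" "u2 \<in> {-1,0,1}" "u3 \<in> {-1,0,1}"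
   and C1: "(m - 1) + (m*m-m)* s1 + (m*m+m)* s2 + (m*m-1)* s3 = 0"
   and C2: "(m + 1) + (m*m-m)* t1 + (m*m+m)* t2 + (m*m-1)* t3 = 0"
   and C3: "(m*m-m)* u1 + (m*m+m)* u2 + (m*m-1)* u3 = 2*m"
   and R: "s1 + t1 + u1 = 0"
   and D: "m*(m-1) + m*m* s1* s1 + m*m* t1* s2 + (m* u1-1)*m* s3 = 3*m*m"
  shows "s1 = 1 \<and> s2 = 0 \<and> s3 = -1 \<and> t1 = 0 \<and> t2 = -1 \<and> t3 = 1 \<and> u1 = -1 \<and> u2 = 1 \<and> u3 = 0"
proof -
  have 1: "(s1 = 1 \<and> s2 = 0 \<and> s3 = -1) \<or> (m = 3 \<and> s1 = -1 \<and> s2 = 1 \<and> s3 = -1)"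
    using col1[OF m s C1] .
  have 2: "t1 = 0 \<and> t2 = -1 \<and> t3 = 1" using col2[OF m t C2] .
  have 3: "(u1 = -1 \<and> u2 = 1 \<and> u3 = 0) \<or> (m = 3 \<and> u1 = 1 \<and> u2 = 0 \<and> u3 = 0)"
    using col3[OF m u C3] .
  show ?thesis using 1 2 3 R D by auto
qed

lemma P_col0:
  fixes A :: "nat \<Rightarrow> real^'a::finite^'a"
  assumes bm: "bm_prim_idempotents A E" and fe: "first_eigenmatrix A E P"
    and A0: "A 0 = mat 1" and l: "l < 4"
  shows "P l 0 = 1"
proof -
  have "E l = P l 0 *\<^sub>R E l" using eig_A[OF bm fe, of 0] l A0 by (simp add: eig_def)
  then have "1 *\<^sub>R E l = P l 0 *\<^sub>R E l" by simp
  then have "1 = P l 0" by (rule scl) (rule E_nz[OF bm l])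
  then show ?thesis by simp
qed

lemma P_rowsum:
  fixes A :: "nat \<Rightarrow> real^'a::finite^'a"
  assumes bm: "bm_prim_idempotents A E" and fe: "first_eigenmatrix A E P"
    and sA: "(\<Sum>i<4. A i) = allones" and l: "l < 4" "l \<noteq> 0"
  shows "(\<Sum>j<4. P l j) = 0"
proof -
  have "(\<Sum>j<4. A j) ** E l = (\<Sum>j<4. A j ** E l)" by (simp add: mm_sum_l)
  also have "\<dots> = (\<Sum>j<4. P l j *\<^sub>R E l)"
    using eig_A[OF bm fe] l by (intro sum.cong) (auto simp: eig_def)
  also have "\<dots> = (\<Sum>j<4. P l j) *\<^sub>R E l" by (simp add: scaleR_sum_left)
  finally have "(\<Sum>j<4. P l j) *\<^sub>R E l = 0 *\<^sub>R E l"
    using allones_E[OF bm l(1)] l sA by simp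
  then show ?thesis by (rule scl) (rule E_nz[OF bm l(1)])
qed

lemma PQ:
  fixes A :: "nat \<Rightarrow> real^'a::finite^'a"
  assumes bm: "bm_prim_idempotents A E" and fe: "first_eigenmatrix A E P"
    and se: "second_eigenmatrix A E Q" and i: "i < 4" and l: "l < 4"
  shows "(\<Sum>j<4. P l j * Q j i) = (if i = l then real CARD('a) else 0)"
proof -
  define n where "n = real CARD('a)"
  have n: "n > 0" by (simp add: n_def)
  have "E i = (1 / n) *\<^sub>R (\<Sum>j<4. Q j i *\<^sub>R A j)" using se i unfolding second_eigenmatrix_def n_def by blast
  then have "E i ** E l = (1 / n) *\<^sub>R (\<Sum>j<4. Q j i *\<^sub>R (A j ** E l))"
    by (simp add: mm_scale_l mm_sum_l)
  also have "\<dots> = (1 / n) *\<^sub>R (\<Sum>j<4. Q j i *\<^sub>R (P l j *\<^sub>R E l))"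
    using eig_A[OF bm fe] l by (simp add: eig_def)
  also have "\<dots> = ((1 / n) * (\<Sum>j<4. P l j * Q j i)) *\<^sub>R E l"
    by (simp add: scaleR_sum_left[symmetric] mult.commute)
  finally have h1: "E i ** E l = ((1 / n) * (\<Sum>j<4. P l j * Q j i)) *\<^sub>R E l" .
  have h2: "E i ** E l = (if i = l then 1 else 0) *\<^sub>R E l"
    using E_orth[OF bm i l] by simp
  have "((1 / n) * (\<Sum>j<4. P l j * Q j i)) *\<^sub>R E l = (if i = l then 1 else 0) *\<^sub>R E l"
    by (rule trans[OF h1[symmetric] h2])
  then have "(1 / n) * (\<Sum>j<4. P l j * Q j i) = (if i = l then 1 else 0)"
    by (rule scl) (rule E_nz[OF bm l])
  then show ?thesis using n unfolding n_def[symmetric] by (auto simp: field_simps split: if_splits)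
qed

lemma char_sq:
  fixes m :: real
  assumes "i < 4" "l < 4"
  shows "(\<Sum>j<4. char_table_m m l j * char_table_m m j i) = (if l = i then 3*m^2 else 0)"
proof -
  have e: "(\<Sum>j<4. char_table_m m l j * char_table_m m j i) = char_table_m m l 0 * char_table_m m 0 i
     + char_table_m m l 1 * char_table_m m 1 i + char_table_m m l 2 * char_table_m m 2 i + char_table_m m l 3 * char_table_m m 3 i"
    by (simp add: four)
  have "i = 0 \<or> i = 1 \<or> i = 2 \<or> i = 3" "l = 0 \<or> l = 1 \<or> l = 2 \<or> l = 3" using assms by auto
  then show ?thesis unfolding e
    by (elim disjE) (simp_all add: char_table_m_def algebra_simps power2_eq_square)
qed

lemma root_unique:
  fixes x r \<mu> :: real
  assumes "x^3 = \<mu>*x + (r^3 - \<mu>*r)" "4*\<mu> < 3*r^2"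
  shows "x = r"
proof -
  have f: "(x - r) * (x^2 + r*x + r^2 - \<mu>) = 0" using assms(1) by algebra
  define q where "q = (2*x+r)^2"
  define w where "w = x^2 + r*x + r^2 - \<mu>"
  have "4 * w = q + (3*r^2 - 4*\<mu>)" unfolding q_def w_def by algebra
  moreover have "q \<ge> 0" unfolding q_def by simp
  ultimately have "w > 0" using assms(2) by linarith
  then have "x^2 + r*x + r^2 - \<mu> > 0" unfolding w_def .
  then show ?thesis using f by simp
qed

lemma root3:
  fixes x m :: real
  assumes "x^3 = m^2 * x + 0" "m > 0"
  shows "x / m \<in> {-1,0,1}" "x = m * (x / m)"
proof -
  have "x * (x - m) * (x + m) = 0" using assms(1) by algebra
  then have "x = 0 \<or> x = m \<or> x = -m" by auto
  then show "x / m \<in> {-1,0,1}" using assms(2) by auto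
  show "x = m * (x / m)" using assms(2) by simp
qed

lemma big_root:
  fixes x r mr :: real
  assumes "r \<ge> 2*mr" "mr > 0" "x^3 = mr^2*x + (r^3 - mr^2*r)"
  shows "x = r"
proof (rule root_unique[OF assms(3)])
  have "(2*mr)^2 \<le> r^2" using assms(1,2) by (intro power_mono) auto
  moreover have "mr^2 > 0" using assms(2) by simp
  moreover have "(2*mr)^2 = 4 * mr^2" by (simp add: power_mult_distrib)
  ultimately show "4 * mr^2 < 3 * r^2" by linarith
qed

theorem lemma5p1:
  fixes A :: "nat \<Rightarrow> real^'a::finite^'a" and m :: nat
  assumes "m > 0" and "m mod 3 = 0"
    and "CARD('a) = 3 * m^2"
    and "sym_assoc_scheme3 A"
  shows "(\<exists>E. bm_prim_idempotents A E \<and> first_eigenmatrix A E (char_table_m (real m)))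
    \<longleftrightarrow>
    (self_dual A \<and>
     A 1 ** A 1 ** A 1 = (real m)^2 *\<^sub>R A 1
        + ((1/3) * (real m)^2 * (real m - 1) * (real m - 2)) *\<^sub>R allones \<and>
     A 2 ** A 2 ** A 2 = (real m)^2 *\<^sub>R A 2
        + ((1/3) * (real m)^2 * (real m + 1) * (real m + 2)) *\<^sub>R allones \<and>
     (A 3 + mat 1) ** (A 3 + mat 1) ** (A 3 + mat 1) = (real m)^2 *\<^sub>R (A 3 + mat 1)
        + ((1/3) * (real m)^2 * (real m - 1) * (real m + 1)) *\<^sub>R allones)"
proof -
  define mr where "mr = real m"
  have A0: "A 0 = mat 1" and sA: "(\<Sum>i<4. A i) = allones"
    using assms(4) unfolding sym_assoc_scheme3_def by blast+
  have n: "real CARD('a) = 3 * mr^2" using assms(3) by (simp add: mr_def)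
  have mpos: "mr > 0" using assms(1) by (simp add: mr_def)
  have m36: "mr = 3 \<or> mr \<ge> 6"
  proof -
    have "m = 3 \<or> m \<ge> 6" using assms(1,2) by presburger
    then show ?thesis by (auto simp: mr_def)
  qed
  have m3: "mr \<ge> 3" using m36 by auto
  show ?thesis unfolding mr_def[symmetric]
  proof
    assume "\<exists>E. bm_prim_idempotents A E \<and> first_eigenmatrix A E (char_table_m mr)"
    then obtain E where bm: "bm_prim_idempotents A E" and fe: "first_eigenmatrix A E (char_table_m mr)"
      by blast
    let ?P = "char_table_m mr"
    have sd: "self_dual A"
      unfolding self_dual_def
    proof (intro exI conjI)
      show "bm_prim_idempotents A E" by (rule bm)
      show "first_eigenmatrix A E ?P" by (rule fe)
      show "\<forall>i<4. \<forall>j<4. ?P i j = ?P i j" by simp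
      show "second_eigenmatrix A E ?P"
        unfolding second_eigenmatrix_def
      proof (intro allI impI)
        fix i :: nat assume i: "i < 4"
        show "E i = (1 / real CARD('a)) *\<^sub>R (\<Sum>j<4. ?P j i *\<^sub>R A j)"
        proof (rule ext_E[OF bm])
          fix l :: nat assume l: "l < 4"
          have "((1 / real CARD('a)) *\<^sub>R (\<Sum>j<4. ?P j i *\<^sub>R A j)) ** E l
              = (1 / real CARD('a)) *\<^sub>R (\<Sum>j<4. ?P j i *\<^sub>R (A j ** E l))"
            by (simp add: mm_scale_l mm_sum_l)
          also have "\<dots> = (1 / real CARD('a)) *\<^sub>R (\<Sum>j<4. ?P j i *\<^sub>R (?P l j *\<^sub>R E l))"
            using eig_A[OF bm fe] l by (simp add: eig_def)
          also have "\<dots> = ((1 / real CARD('a)) * (\<Sum>j<4. ?P l j * ?P j i)) *\<^sub>R E l"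
            by (simp add: scaleR_sum_left[symmetric] mult.commute)
          also have "\<dots> = (if l = i then 1 else 0) *\<^sub>R E l"
            using char_sq[OF i l, of mr] n mpos by simp
          also have "\<dots> = E i ** E l" using E_orth[OF bm i l] by auto
          finally show "E i ** E l = ((1 / real CARD('a)) *\<^sub>R (\<Sum>j<4. ?P j i *\<^sub>R A j)) ** E l"
            by simp
        qed
      qed
    qed
    have e1: "eig (A 1) E (\<lambda>l. ?P l 1)" by (rule eig_A[OF bm fe]) simp
    have e2: "eig (A 2) E (\<lambda>l. ?P l 2)" by (rule eig_A[OF bm fe]) simp
    have e3: "eig (A 3 + mat 1) E (\<lambda>l. ?P l 3 + 1)" by (rule eig_A3[OF bm fe])
    have c1: "A 1 ** A 1 ** A 1 = mr^2 *\<^sub>R A 1 + ((1/3) * mr^2 * (mr - 1) * (mr - 2)) *\<^sub>R allones"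
      unfolding eig_cube[OF bm e1] n
      by (intro allI impI, drule lt4, elim disjE,
          simp_all add: char_table_m_def power3_eq_cube power2_eq_square field_simps)
    have c2: "A 2 ** A 2 ** A 2 = mr^2 *\<^sub>R A 2 + ((1/3) * mr^2 * (mr + 1) * (mr + 2)) *\<^sub>R allones"
      unfolding eig_cube[OF bm e2] n
      by (intro allI impI, drule lt4, elim disjE,
          simp_all add: char_table_m_def power3_eq_cube power2_eq_square field_simps)
    have c3: "(A 3 + mat 1) ** (A 3 + mat 1) ** (A 3 + mat 1) = mr^2 *\<^sub>R (A 3 + mat 1)
        + ((1/3) * mr^2 * (mr - 1) * (mr + 1)) *\<^sub>R allones"
      unfolding eig_cube[OF bm e3] n
      by (intro allI impI, drule lt4, elim disjE,
          simp_all add: char_table_m_def power3_eq_cube power2_eq_square field_simps)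
    show "self_dual A \<and>
     A 1 ** A 1 ** A 1 = mr^2 *\<^sub>R A 1 + ((1/3) * mr^2 * (mr - 1) * (mr - 2)) *\<^sub>R allones \<and>
     A 2 ** A 2 ** A 2 = mr^2 *\<^sub>R A 2 + ((1/3) * mr^2 * (mr + 1) * (mr + 2)) *\<^sub>R allones \<and>
     (A 3 + mat 1) ** (A 3 + mat 1) ** (A 3 + mat 1) = mr^2 *\<^sub>R (A 3 + mat 1)
        + ((1/3) * mr^2 * (mr - 1) * (mr + 1)) *\<^sub>R allones"
      using sd c1 c2 c3 by blast
  next
    assume h: "self_dual A \<and>
     A 1 ** A 1 ** A 1 = mr^2 *\<^sub>R A 1 + ((1/3) * mr^2 * (mr - 1) * (mr - 2)) *\<^sub>R allones \<and>
     A 2 ** A 2 ** A 2 = mr^2 *\<^sub>R A 2 + ((1/3) * mr^2 * (mr + 1) * (mr + 2)) *\<^sub>R allones \<and>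
     (A 3 + mat 1) ** (A 3 + mat 1) ** (A 3 + mat 1) = mr^2 *\<^sub>R (A 3 + mat 1)
        + ((1/3) * mr^2 * (mr - 1) * (mr + 1)) *\<^sub>R allones"
    then obtain E P Q where bm: "bm_prim_idempotents A E" and fe: "first_eigenmatrix A E P"
      and se: "second_eigenmatrix A E Q" and PQe: "\<forall>i<4. \<forall>j<4. P i j = Q i j"
      unfolding self_dual_def by blast
    have PP: "(\<Sum>j<4. P l j * P j i) = (if i = l then 3*mr^2 else 0)" if "i < 4" "l < 4" for i l
    proof -
      have "(\<Sum>j<4. P l j * P j i) = (\<Sum>j<4. P l j * Q j i)"
        using PQe that by (intro sum.cong) auto
      then show ?thesis using PQ[OF bm fe se that] n by simp
    qed
    have col0: "P l 0 = 1" if "l < 4" for l by (rule P_col0[OF bm fe A0 that])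
    have rs: "(\<Sum>j<4. P l j) = 0" if "l < 4" "l \<noteq> 0" for l by (rule P_rowsum[OF bm fe sA that])
    have e1: "eig (A 1) E (\<lambda>l. P l 1)" by (rule eig_A[OF bm fe]) simp
    have e2: "eig (A 2) E (\<lambda>l. P l 2)" by (rule eig_A[OF bm fe]) simp
    have e3: "eig (A 3 + mat 1) E (\<lambda>l. P l 3 + 1)" by (rule eig_A3[OF bm fe])
    have k1: "\<forall>l<4. P l 1 ^ 3 = mr^2 * P l 1 + (if l = 0 then ((1/3) * mr^2 * (mr - 1) * (mr - 2)) * (3 * mr^2) else 0)"
      using h unfolding eig_cube[OF bm e1] n by blast
    have k2: "\<forall>l<4. P l 2 ^ 3 = mr^2 * P l 2 + (if l = 0 then ((1/3) * mr^2 * (mr + 1) * (mr + 2)) * (3 * mr^2) else 0)"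
      using h unfolding eig_cube[OF bm e2] n by blast
    have k3: "\<forall>l<4. (P l 3 + 1) ^ 3 = mr^2 * (P l 3 + 1) + (if l = 0 then ((1/3) * mr^2 * (mr - 1) * (mr + 1)) * (3 * mr^2) else 0)"
      using h unfolding eig_cube[OF bm e3] n by blast
    have P01: "P 0 1 = mr * (mr - 1)"
    proof (rule big_root[OF _ mpos])
      have "mr * (mr - 1) - 2 * mr = mr * (mr - 3)" by algebra
      moreover have "mr * (mr - 3) \<ge> 0" using mpos m3 by simp
      ultimately show "mr * (mr - 1) \<ge> 2 * mr" by linarith
      have "((1/3) * mr^2 * (mr - 1) * (mr - 2)) * (3 * mr^2) = (mr * (mr - 1))^3 - mr^2 * (mr * (mr - 1))"
        by algebra
      then show "P 0 1 ^ 3 = mr^2 * P 0 1 + ((mr * (mr - 1))^3 - mr^2 * (mr * (mr - 1)))"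
        using k1 by simp
    qed
    have P02: "P 0 2 = mr * (mr + 1)"
    proof (rule big_root[OF _ mpos])
      have "mr * (mr + 1) - 2 * mr = mr * (mr - 1)" by algebra
      moreover have "mr * (mr - 1) \<ge> 0" using mpos m3 by simp
      ultimately show "mr * (mr + 1) \<ge> 2 * mr" by linarith
      have "((1/3) * mr^2 * (mr + 1) * (mr + 2)) * (3 * mr^2) = (mr * (mr + 1))^3 - mr^2 * (mr * (mr + 1))"
        by algebra
      then show "P 0 2 ^ 3 = mr^2 * P 0 2 + ((mr * (mr + 1))^3 - mr^2 * (mr * (mr + 1)))"
        using k2 by simp
    qed
    have P03': "P 0 3 + 1 = mr * mr"
    proof (rule big_root[OF _ mpos])
      have "mr * mr - 2 * mr = mr * (mr - 2)" by algebra
      moreover have "mr * (mr - 2) \<ge> 0" using mpos m3 by simp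
      ultimately show "mr * mr \<ge> 2 * mr" by linarith
      have "((1/3) * mr^2 * (mr - 1) * (mr + 1)) * (3 * mr^2) = (mr * mr)^3 - mr^2 * (mr * mr)"
        by algebra
      then show "(P 0 3 + 1) ^ 3 = mr^2 * (P 0 3 + 1) + ((mr * mr)^3 - mr^2 * (mr * mr))"
        using k3 by simp
    qed
    have P03: "P 0 3 = mr * mr - 1" using P03' by simp
    have r1: "P l 1 / mr \<in> {-1,0,1}" "P l 1 = mr * (P l 1 / mr)" if "l < 4" "l \<noteq> 0" for l
      using root3[OF _ mpos, of "P l 1"] k1 that by auto
    have r2: "P l 2 / mr \<in> {-1,0,1}" "P l 2 = mr * (P l 2 / mr)" if "l < 4" "l \<noteq> 0" for l
      using root3[OF _ mpos, of "P l 2"] k2 that by auto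
    have r3: "(P l 3 + 1) / mr \<in> {-1,0,1}" "P l 3 = mr * ((P l 3 + 1) / mr) - 1" if "l < 4" "l \<noteq> 0" for l
      using root3[OF _ mpos, of "P l 3 + 1"] k3 that by auto
    define s1 where "s1 = P 1 1 / mr"
    define s2 where "s2 = P 2 1 / mr"
    define s3 where "s3 = P 3 1 / mr"
    define t1 where "t1 = P 1 2 / mr"
    define t2 where "t2 = P 2 2 / mr"
    define t3 where "t3 = P 3 2 / mr"
    define u1 where "u1 = (P 1 3 + 1) / mr"
    define u2 where "u2 = (P 2 3 + 1) / mr"
    define u3 where "u3 = (P 3 3 + 1) / mr"
    have S: "s1 \<in> {-1,0,1}" "s2 \<in> {-1,0,1}" "s3 \<in> {-1,0,1}"
      unfolding s1_def s2_def s3_def by (rule r1(1); simp)+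
    have T: "t1 \<in> {-1,0,1}" "t2 \<in> {-1,0,1}" "t3 \<in> {-1,0,1}"
      unfolding t1_def t2_def t3_def by (rule r2(1); simp)+
    have U: "u1 \<in> {-1,0,1}" "u2 \<in> {-1,0,1}" "u3 \<in> {-1,0,1}"
      unfolding u1_def u2_def u3_def by (rule r3(1); simp)+
    have Ps: "P 1 1 = mr * s1" "P 2 1 = mr * s2" "P 3 1 = mr * s3"
      unfolding s1_def s2_def s3_def by (rule r1(2); simp)+
    have Pt: "P 1 2 = mr * t1" "P 2 2 = mr * t2" "P 3 2 = mr * t3"
      unfolding t1_def t2_def t3_def by (rule r2(2); simp)+
    have Pu: "P 1 3 = mr * u1 - 1" "P 2 3 = mr * u2 - 1" "P 3 3 = mr * u3 - 1"
      unfolding u1_def u2_def u3_def by (rule r3(2); simp)+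

    have P00: "P 0 0 = 1" and P10: "P 1 0 = 1" and P20: "P 2 0 = 1" and P30: "P 3 0 = 1"
      by (auto intro: col0)
    have eq1: "P 0 0 * P 0 1 + P 0 1 * P 1 1 + P 0 2 * P 2 1 + P 0 3 * P 3 1 = 0"
      using PP[of 1 0] by (simp add: four)
    have eq2: "P 0 0 * P 0 2 + P 0 1 * P 1 2 + P 0 2 * P 2 2 + P 0 3 * P 3 2 = 0"
      using PP[of 2 0] by (simp add: four)
    have eq3: "P 0 0 * P 0 3 + P 0 1 * P 1 3 + P 0 2 * P 2 3 + P 0 3 * P 3 3 = 0"
      using PP[of 3 0] by (simp add: four)
    have eqD: "P 1 0 * P 0 1 + P 1 1 * P 1 1 + P 1 2 * P 2 1 + P 1 3 * P 3 1 = 3 * mr^2"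
      using PP[of 1 1] by (simp add: four)
    have eqR: "P 1 0 + P 1 1 + P 1 2 + P 1 3 = 0"
      using rs[of 1] by (simp add: four)
    note subs = P00 P10 P01 P02 P03 Ps Pt Pu
    have "mr * ((mr - 1) + (mr*mr-mr) * s1 + (mr*mr+mr) * s2 + (mr*mr-1) * s3) = 0"
      using eq1 unfolding subs by algebra
    then have C1: "(mr - 1) + (mr*mr-mr) * s1 + (mr*mr+mr) * s2 + (mr*mr-1) * s3 = 0"
      using mpos by simp
    have "mr * ((mr + 1) + (mr*mr-mr) * t1 + (mr*mr+mr) * t2 + (mr*mr-1) * t3) = 0"
      using eq2 unfolding subs by algebra
    then have C2: "(mr + 1) + (mr*mr-mr) * t1 + (mr*mr+mr) * t2 + (mr*mr-1) * t3 = 0"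
      using mpos by simp
    have "mr * ((mr*mr-mr) * u1 + (mr*mr+mr) * u2 + (mr*mr-1) * u3 - 2*mr) = 0"
      using eq3 unfolding subs by algebra
    then have C3: "(mr*mr-mr) * u1 + (mr*mr+mr) * u2 + (mr*mr-1) * u3 = 2*mr"
      using mpos by simp
    have "mr * (s1 + t1 + u1) = 0"
      using eqR unfolding subs by algebra
    then have R: "s1 + t1 + u1 = 0" using mpos by simp
    have D: "mr*(mr-1) + mr*mr* s1* s1 + mr*mr* t1* s2 + (mr* u1-1)*mr* s3 = 3*mr*mr"
      using eqD unfolding subs by algebra
    have sol: "s1 = 1 \<and> s2 = 0 \<and> s3 = -1 \<and> t1 = 0 \<and> t2 = -1 \<and> t3 = 1 \<and> u1 = -1 \<and> u2 = 1 \<and> u3 = 0"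
      by (rule comb[OF m36 S T U C1 C2 C3 R D])
    have Pchar: "P i j = char_table_m mr i j" if "i < 4" "j < 4" for i j
      using lt4[OF that(1)] lt4[OF that(2)] sol subs P20 P30
      by (elim disjE) (simp_all add: char_table_m_def algebra_simps)
    have "first_eigenmatrix A E (char_table_m mr)"
      using fe unfolding first_eigenmatrix_def
    proof (intro allI impI)
      fix j :: nat assume j: "j < 4" and f: "\<forall>j<4. A j = (\<Sum>i<4. P i j *\<^sub>R E i)"
      have "A j = (\<Sum>i<4. P i j *\<^sub>R E i)" using f j by blast
      also have "\<dots> = (\<Sum>i<4. char_table_m mr i j *\<^sub>R E i)"
        using Pchar j by (intro sum.cong) auto
      finally show "A j = (\<Sum>i<4. char_table_m mr i j *\<^sub>R E i)" .
    qed
    then show "\<exists>E. bm_prim_idempotents A E \<and> first_eigenmatrix A E (char_table_m mr)"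
      using bm by blast
  qed
qed

end
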